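(* Let $N\ge1$, $\alpha>0$, $\tau_0\ge0$, let $c_1,\dots,c_N\in\mathbb{C}\setminus\{0\}$ and let $\mu_1,\dots,\mu_N\in\mathbb{C}$ be pairwise distinct. For $\lambda\in\mathbb{C}$ put $k_i:=\lambda+\mu_i$ and let $\mathcal{S}:=\{\lambda\in\mathbb{C}:k_i^2=k_j^2\text{ for some }i\neq j\}$. On $Y:=C([-1,1];\mathbb{C})$ define $(K_iq)(x):=\int_{-1}^1e^{-k_i|x-r|}q(r)\,dr$ and $$\Delta(\lambda)q:=(\lambda+\alpha)e^{\lambda\tau_0}q-\sum_{i=1}^Nc_iK_iq .$$ Let $\lambda\notin\mathcal{S}$. Then there exist unique vectors $\zeta=[\zeta_0,\dots,\zeta_{N-1}]\in\mathbb{C}^N$ and $\beta=[\beta_0,\dots,\beta_N]\in\mathbb{C}^{N+1}$, depending on $\lambda$, such that for every $q\in C^{2N}([-1,1];\mathbb{C})$ $$(\zeta_0+\zeta_1D_x^2+\dots+\zeta_{N-1}D_x^{2N-2}+D_x^{2N})\,\Delta(\lambda)q=(\beta_0+\beta_1D_x^2+\dots+\beta_{N-1}D_x^{2N-2}+\beta_ND_x^{2N})\,q$$ on $[-1,1]$.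
   Context: $D_x$ denotes differentiation with respect to $x\in[-1,1]$. The operator $\Delta(\lambda)$ is $e^{\lambda\tau_0}$ times the characteristic operator $q\mapsto(\lambda+\alpha)q(x)-\int_{-1}^1J(x,r)e^{-\lambda\tau_0-\lambda|x-r|}q(r)\,dr$ of the linearised neural field equation with connectivity $J(x,r)=\sum_ic_ie^{-\mu_i|x-r|}$ and delay $\tau(x,r)=\tau_0+|x-r|$. *)

theory Defs
  imports "HOL-Analysis.Analysis"
begin

fun dnth :: "nat \<Rightarrow> (real \<Rightarrow> complex) \<Rightarrow> real \<Rightarrow> complex" where
  "dnth 0 f = f"
| "dnth (Suc n) f = (\<lambda>x. vector_derivative (dnth n f) (at x within {-1..1}))"

definition Cn_on :: "nat \<Rightarrow> (real \<Rightarrow> complex) \<Rightarrow> bool" where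
  "Cn_on n f \<longleftrightarrow>
     (\<forall>k<n. \<forall>x\<in>{-1..1}. (dnth k f has_vector_derivative dnth (Suc k) f x) (at x within {-1..1}))
     \<and> continuous_on {-1..1} (dnth n f)"

definition Kop :: "complex \<Rightarrow> (real \<Rightarrow> complex) \<Rightarrow> real \<Rightarrow> complex" where
  "Kop k q x = integral {-1..1} (\<lambda>r. exp (- k * complex_of_real \<bar>x - r\<bar>) * q r)"

definition Delta :: "nat \<Rightarrow> real \<Rightarrow> real \<Rightarrow> (nat \<Rightarrow> complex) \<Rightarrow> (nat \<Rightarrow> complex)
                      \<Rightarrow> complex \<Rightarrow> (real \<Rightarrow> complex) \<Rightarrow> real \<Rightarrow> complex" where
  "Delta N \<alpha> \<tau>0 c \<mu> lam q x =
     (lam + complex_of_real \<alpha>) * exp (lam * complex_of_real \<tau>0) * q x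
     - (\<Sum>i<N. c i * Kop (lam + \<mu> i) q x)"

end

theory Submission
  imports Defs "HOL-Computational_Algebra.Polynomial"
begin


abbreviation "II \<equiv> {-1..1::real}"

declare dnth.simps(2)[simp del]
lemmas dS = dnth.simps(2)

lemma vd_eq: fixes f :: "real \<Rightarrow> complex" shows "x \<in> II \<Longrightarrow> (f has_vector_derivative f') (at x within II) \<Longrightarrow> vector_derivative f (at x within II) = f'"
  by (rule vector_derivative_within_closed_interval) auto

lemma vd_transf: "(f has_vector_derivative f') (at x within S) \<Longrightarrow> x \<in> S \<Longrightarrow> (\<And>y. y \<in> S \<Longrightarrow> g y = f y) \<Longrightarrow> (g has_vector_derivative f') (at x within S)"
  by (rule has_vector_derivative_transform)

lemma cont_transf: assumes "continuous_on S f" "\<And>x. x \<in> S \<Longrightarrow> g x = f x" shows "continuous_on S g"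
proof -
  have "continuous_on S g = continuous_on S f" by (rule continuous_on_cong) (auto simp: assms(2))
  then show ?thesis using assms(1) by simp
qed

lemma vd_cong: "x \<in> II \<Longrightarrow> (\<And>y. y \<in> II \<Longrightarrow> f y = g y) \<Longrightarrow> vector_derivative f (at x within II) = vector_derivative g (at x within II)"
  by (rule vector_derivative_cong_eq) (auto intro: always_eventually)

lemma dnth_Suc_eq: "dnth (Suc n) f x = vector_derivative (dnth n f) (at x within II)"
  by (simp add: dS)

lemma dnth_cong: "(\<And>y. y \<in> II \<Longrightarrow> f y = g y) \<Longrightarrow> x \<in> II \<Longrightarrow> dnth n f x = dnth n g x"
proof (induction n arbitrary: x)
  case 0 then show ?case by simp
next
  case (Suc n) then show ?case unfolding dnth_Suc_eq by (intro vd_cong) auto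
qed

lemma dnth_add: "dnth (a + b) f = dnth a (dnth b f)"
  by (induction a) (auto simp: dS)

lemma Cn_on_cong: assumes "Cn_on n f" "\<And>y. y \<in> II \<Longrightarrow> f y = g y" shows "Cn_on n g"
proof -
  have e: "\<And>k x. x \<in> II \<Longrightarrow> dnth k g x = dnth k f x" using assms(2) by (intro dnth_cong) auto
  show ?thesis unfolding Cn_on_def
  proof (intro conjI allI impI ballI)
    fix k x assume "k < n" "x \<in> II"
    then have "(dnth k f has_vector_derivative dnth (Suc k) f x) (at x within II)"
      using assms(1) unfolding Cn_on_def by blast
    then have "(dnth k f has_vector_derivative dnth (Suc k) g x) (at x within II)"
      using e[of x "Suc k"] \<open>x\<in>II\<close> by simp
    then show "(dnth k g has_vector_derivative dnth (Suc k) g x) (at x within II)"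
      by (rule vd_transf) (use e \<open>x\<in>II\<close> in auto)
  next
    have "continuous_on II (dnth n f)" using assms(1) unfolding Cn_on_def by blast
    then show "continuous_on II (dnth n g)"
      by (rule cont_transf) (use e in auto)
  qed
qed

lemma Cn_on_mono: assumes "Cn_on n f" "m \<le> n" shows "Cn_on m f"
proof (cases "m = n")
  case True then show ?thesis using assms(1) by simp
next
  case False
  then have mn: "m < n" using assms(2) by simp
  have d: "\<forall>k<n. \<forall>x\<in>II. (dnth k f has_vector_derivative dnth (Suc k) f x) (at x within II)"
    using assms(1) unfolding Cn_on_def by blast
  then have "\<forall>x\<in>II. (dnth m f has_vector_derivative dnth (Suc m) f x) (at x within II)"
    using mn by blast
  then have "continuous_on II (dnth m f)" by (intro continuous_on_vector_derivative) blast
  moreover have "\<forall>k<m. \<forall>x\<in>II. (dnth k f has_vector_derivative dnth (Suc k) f x) (at x within II)"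
    using d mn by simp
  ultimately show ?thesis unfolding Cn_on_def by blast
qed

lemma Cn_on_dnth: assumes "Cn_on (n + j) f" shows "Cn_on n (dnth j f)"
proof -
  have d: "\<forall>k<n+j. \<forall>x\<in>II. (dnth k f has_vector_derivative dnth (Suc k) f x) (at x within II)"
    and c: "continuous_on II (dnth (n+j) f)"
    using assms unfolding Cn_on_def by blast+
  have "\<forall>k<n. \<forall>x\<in>II. (dnth (k+j) f has_vector_derivative dnth (Suc k + j) f x) (at x within II)"
    using d by simp
  then show ?thesis using c unfolding Cn_on_def dnth_add[symmetric] by simp
qed

lemma dnth_zero: "x \<in> II \<Longrightarrow> dnth j (\<lambda>_. 0) x = 0"
proof (induction j arbitrary: x)
  case (Suc j)
  have "vector_derivative (dnth j (\<lambda>_. 0)) (at x within II) = vector_derivative (\<lambda>_. 0::complex) (at x within II)"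
    using Suc by (intro vd_cong) auto
  also have "\<dots> = 0" using Suc.prems by (intro vd_eq) (auto intro: has_vector_derivative_const)
  finally show ?case by (simp add: dnth_Suc_eq)
qed simp

lemma Cn_on_zero: "Cn_on n (\<lambda>_. 0)"
  unfolding Cn_on_def
proof (intro conjI allI impI ballI)
  fix k x assume x: "x \<in> II"
  have "((\<lambda>_. 0::complex) has_vector_derivative 0) (at x within II)" by (rule has_vector_derivative_const)
  then have "((\<lambda>_. 0::complex) has_vector_derivative dnth (Suc k) (\<lambda>_. 0) x) (at x within II)"
    using dnth_zero[OF x] by simp
  then show "(dnth k (\<lambda>_. 0) has_vector_derivative dnth (Suc k) (\<lambda>_. 0) x) (at x within II)"
    by (rule vd_transf) (use x dnth_zero in auto)
next
  have "continuous_on II (\<lambda>_. 0::complex)" by simp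
  then show "continuous_on II (dnth n (\<lambda>_. 0::complex))"
    by (rule cont_transf) (use dnth_zero in auto)
qed

lemma lin2:
  assumes f: "Cn_on n f" and g: "Cn_on n g"
  shows "Cn_on n (\<lambda>x. a * f x + b * g x)"
    and "\<And>j x. j \<le> n \<Longrightarrow> x \<in> II \<Longrightarrow> dnth j (\<lambda>x. a * f x + b * g x) x = a * dnth j f x + b * dnth j g x"
proof -
  define h where "h = (\<lambda>x. a * f x + b * g x)"
  have D: "dnth j h x = a * dnth j f x + b * dnth j g x" if "j \<le> n" "x \<in> II" for j x
    using that
  proof (induction j arbitrary: x)
    case 0 then show ?case by (simp add: h_def)
  next
    case (Suc j)
    have "dnth (Suc j) h x = vector_derivative (\<lambda>x. a * dnth j f x + b * dnth j g x) (at x within II)"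
      unfolding dnth_Suc_eq using Suc by (intro vd_cong) auto
    also have "\<dots> = a * dnth (Suc j) f x + b * dnth (Suc j) g x"
    proof (rule vd_eq[OF Suc.prems(2)])
      have "(dnth j f has_vector_derivative dnth (Suc j) f x) (at x within II)"
        "(dnth j g has_vector_derivative dnth (Suc j) g x) (at x within II)"
        using f g Suc.prems unfolding Cn_on_def by auto
      then show "((\<lambda>x. a * dnth j f x + b * dnth j g x) has_vector_derivative a * dnth (Suc j) f x + b * dnth (Suc j) g x) (at x within II)"
        by (intro has_vector_derivative_add has_vector_derivative_mult_right)
    qed
    finally show ?case .
  qed
  then show "\<And>j x. j \<le> n \<Longrightarrow> x \<in> II \<Longrightarrow> dnth j (\<lambda>x. a * f x + b * g x) x = a * dnth j f x + b * dnth j g x"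
    unfolding h_def .
  have "Cn_on n h"
    unfolding Cn_on_def
  proof (intro conjI allI impI ballI)
    fix k x assume k: "k < n" and x: "x \<in> II"
    have "(dnth k f has_vector_derivative dnth (Suc k) f x) (at x within II)"
      "(dnth k g has_vector_derivative dnth (Suc k) g x) (at x within II)"
      using f g k x unfolding Cn_on_def by auto
    then have "((\<lambda>x. a * dnth k f x + b * dnth k g x) has_vector_derivative a * dnth (Suc k) f x + b * dnth (Suc k) g x) (at x within II)"
      by (intro has_vector_derivative_add has_vector_derivative_mult_right)
    moreover have "a * dnth (Suc k) f x + b * dnth (Suc k) g x = dnth (Suc k) h x"
      by (rule D[symmetric]) (use k x in auto)
    ultimately have "((\<lambda>x. a * dnth k f x + b * dnth k g x) has_vector_derivative dnth (Suc k) h x) (at x within II)"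
      by simp
    then show "(dnth k h has_vector_derivative dnth (Suc k) h x) (at x within II)"
      by (rule vd_transf) (use D k x in auto)
  next
    have "continuous_on II (\<lambda>x. a * dnth n f x + b * dnth n g x)"
      using f g unfolding Cn_on_def by (auto intro!: continuous_intros)
    then show "continuous_on II (dnth n h)"
      by (rule cont_transf) (use D in auto)
  qed
  then show "Cn_on n (\<lambda>x. a * f x + b * g x)" unfolding h_def .
qed

lemma linsum:
  assumes "finite S" "\<And>i. i \<in> S \<Longrightarrow> Cn_on n (f i)"
  shows "Cn_on n (\<lambda>x. \<Sum>i\<in>S. a i * f i x)"
    and "\<And>j x. j \<le> n \<Longrightarrow> x \<in> II \<Longrightarrow> dnth j (\<lambda>x. \<Sum>i\<in>S. a i * f i x) x = (\<Sum>i\<in>S. a i * dnth j (f i) x)"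
proof -
  have "Cn_on n (\<lambda>x. \<Sum>i\<in>S. a i * f i x) \<and> (\<forall>j x. j \<le> n \<longrightarrow> x \<in> II \<longrightarrow> dnth j (\<lambda>x. \<Sum>i\<in>S. a i * f i x) x = (\<Sum>i\<in>S. a i * dnth j (f i) x))"
    using assms
  proof (induction S rule: finite_induct)
    case empty then show ?case using Cn_on_zero dnth_zero by simp
  next
    case (insert i S)
    have e: "(\<lambda>x. \<Sum>i\<in>insert i S. a i * f i x) = (\<lambda>x. a i * f i x + 1 * (\<Sum>i\<in>S. a i * f i x))"
      using insert(1,2) by auto
    have fi: "Cn_on n (f i)" using insert(4) by simp
    have IH: "Cn_on n (\<lambda>x. \<Sum>i\<in>S. a i * f i x)"
      "\<forall>j x. j \<le> n \<longrightarrow> x \<in> II \<longrightarrow> dnth j (\<lambda>x. \<Sum>i\<in>S. a i * f i x) x = (\<Sum>i\<in>S. a i * dnth j (f i) x)"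
      using insert(3,4) by auto
    note L = lin2[OF fi IH(1), where a="a i" and b=1]
    show ?case unfolding e
    proof (intro conjI allI impI)
      show "Cn_on n (\<lambda>x. a i * f i x + 1 * (\<Sum>i\<in>S. a i * f i x))" by (rule L(1))
      fix j x assume "j \<le> n" "x \<in> II"
      then show "dnth j (\<lambda>x. a i * f i x + 1 * (\<Sum>i\<in>S. a i * f i x)) x = (\<Sum>i\<in>insert i S. a i * dnth j (f i) x)"
        using L(2)[of j x] IH(2) insert(1,2) by simp
    qed
  qed
  then show "Cn_on n (\<lambda>x. \<Sum>i\<in>S. a i * f i x)"
    "\<And>j x. j \<le> n \<Longrightarrow> x \<in> II \<Longrightarrow> dnth j (\<lambda>x. \<Sum>i\<in>S. a i * f i x) x = (\<Sum>i\<in>S. a i * dnth j (f i) x)"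
    by auto
qed


lemma vd_rhs: "(f has_vector_derivative a) F \<Longrightarrow> a = b \<Longrightarrow> (f has_vector_derivative b) F" by simp

lemma shift_dnth:
  fixes f f1 g :: "real \<Rightarrow> complex"
  assumes d1: "\<forall>x\<in>II. (f has_vector_derivative f1 x) (at x within II)"
    and d2: "\<forall>x\<in>II. (f1 has_vector_derivative g x) (at x within II)"
  shows "\<And>x. x \<in> II \<Longrightarrow> dnth (Suc 0) f x = f1 x"
    and "\<And>x j. x \<in> II \<Longrightarrow> dnth (j+2) f x = dnth j g x"
proof -
  show e1: "dnth (Suc 0) f x = f1 x" if "x \<in> II" for x
    using d1 that unfolding dnth_Suc_eq by (simp add: vd_eq)
  have e2: "dnth 2 f x = g x" if x: "x \<in> II" for x
  proof -
    have "dnth 2 f x = vector_derivative (dnth (Suc 0) f) (at x within II)" by (simp add: numeral_2_eq_2 dnth_Suc_eq)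
    also have "\<dots> = vector_derivative f1 (at x within II)" using x e1 by (intro vd_cong) auto
    also have "\<dots> = g x" using d2 x by (simp add: vd_eq)
    finally show ?thesis .
  qed
  show "dnth (j+2) f x = dnth j g x" if "x \<in> II" for x j
    unfolding dnth_add using that e2 by (intro dnth_cong) auto
qed

lemma shift_Cn:
  fixes f f1 g :: "real \<Rightarrow> complex"
  assumes d1: "\<forall>x\<in>II. (f has_vector_derivative f1 x) (at x within II)"
    and d2: "\<forall>x\<in>II. (f1 has_vector_derivative g x) (at x within II)"
    and g: "Cn_on m g"
  shows "Cn_on (m+2) f"
  unfolding Cn_on_def
proof (intro conjI allI impI ballI)
  note e1 = shift_dnth(1)[OF d1 d2] and e2 = shift_dnth(2)[OF d1 d2]
  fix k x assume k: "k < m + 2" and x: "x \<in> II"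
  have "k = 0 \<or> k = 1 \<or> (k = (k - 2) + 2 \<and> k - 2 < m)" using k by linarith
  then consider "k = 0" | "k = Suc 0" | j where "k = j + 2" "j < m" by force
  then show "(dnth k f has_vector_derivative dnth (Suc k) f x) (at x within II)"
  proof cases
    case 1 then show ?thesis using d1 x e1[OF x] by simp
  next
    case 2
    have "dnth (Suc (Suc 0)) f x = g x" using e2[OF x, of 0] by (simp add: numeral_2_eq_2)
    moreover have "(f1 has_vector_derivative g x) (at x within II)" using d2 x by blast
    then have "(dnth (Suc 0) f has_vector_derivative g x) (at x within II)"
      by (rule vd_transf) (use e1 x in auto)
    ultimately show ?thesis using 2 by simp
  next
    case 3
    have "(dnth j g has_vector_derivative dnth (Suc j) g x) (at x within II)"
      using g 3 x unfolding Cn_on_def by blast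
    moreover have "dnth (Suc k) f x = dnth (Suc j) g x" using e2[OF x, of "Suc j"] 3 by simp
    ultimately have "(dnth j g has_vector_derivative dnth (Suc k) f x) (at x within II)" by simp
    then show ?thesis by (rule vd_transf) (use e2 3 x in auto)
  qed
next
  note e2 = shift_dnth(2)[OF d1 d2]
  have "continuous_on II (dnth m g)" using g unfolding Cn_on_def by blast
  then show "continuous_on II (dnth (m + 2) f)"
    by (rule cont_transf) (use e2 in auto)
qed

lemma exp_vd: "((\<lambda>x. exp (c * complex_of_real x)) has_vector_derivative c * exp (c * complex_of_real x)) (at x within S)"
  by (rule has_vector_derivative_real_field[of "\<lambda>z. exp (c * z)"]) (auto intro!: derivative_eq_intros)

lemma exp_inv1: "exp (- k * complex_of_real x) * exp (k * complex_of_real x) = 1"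
  by (simp flip: exp_add)
lemma exp_inv2: "exp (k * complex_of_real x) * exp (- k * complex_of_real x) = 1"
  by (simp flip: exp_add)


definition FF :: "complex \<Rightarrow> (real \<Rightarrow> complex) \<Rightarrow> real \<Rightarrow> complex" where
  "FF k q x = integral {-1..x} (\<lambda>r. exp (k * complex_of_real r) * q r)"
definition GG :: "complex \<Rightarrow> (real \<Rightarrow> complex) \<Rightarrow> real \<Rightarrow> complex" where
  "GG k q x = integral {-1..1} (\<lambda>r. exp (- k * complex_of_real r) * q r)
     - integral {-1..x} (\<lambda>r. exp (- k * complex_of_real r) * q r)"

lemma exp_split1: "r \<le> x \<Longrightarrow> exp (- k * complex_of_real \<bar>x - r\<bar>) = exp (- k * complex_of_real x) * exp (k * complex_of_real r)"
proof -
  assume "r \<le> x"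
  then have "- k * complex_of_real \<bar>x - r\<bar> = - k * complex_of_real x + k * complex_of_real r"
    by (simp add: algebra_simps)
  then show ?thesis by (simp only: exp_add)
qed

lemma exp_split2: "x \<le> r \<Longrightarrow> exp (- k * complex_of_real \<bar>x - r\<bar>) = exp (k * complex_of_real x) * exp (- k * complex_of_real r)"
proof -
  assume "x \<le> r"
  then have "- k * complex_of_real \<bar>x - r\<bar> = k * complex_of_real x + - k * complex_of_real r"
    by (simp add: algebra_simps)
  then show ?thesis by (simp only: exp_add)
qed

lemma Kop_split:
  assumes q: "continuous_on II q" and x: "x \<in> II"
  shows "Kop k q x = exp (- k * complex_of_real x) * FF k q x + exp (k * complex_of_real x) * GG k q x"
proof -
  let ?h = "\<lambda>r. exp (- k * complex_of_real \<bar>x - r\<bar>) * q r"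
  let ?g = "\<lambda>r. exp (- k * complex_of_real r) * q r"
  have ih: "?h integrable_on II" using q by (intro integrable_continuous_interval) (auto intro!: continuous_intros)
  have ig: "?g integrable_on II" using q by (intro integrable_continuous_interval) (auto intro!: continuous_intros)
  have "Kop k q x = integral {-1..x} ?h + integral {x..1} ?h"
    unfolding Kop_def by (rule Henstock_Kurzweil_Integration.integral_combine[symmetric]) (use x ih in auto)
  also have "integral {-1..x} ?h = integral {-1..x} (\<lambda>r. exp (- k * complex_of_real x) * (exp (k * complex_of_real r) * q r))"
  proof (rule integral_cong)
    fix r assume "r \<in> {-1..x}"
    then have "r \<le> x" by auto
    then show "?h r = exp (- k * complex_of_real x) * (exp (k * complex_of_real r) * q r)"
      by (simp only: exp_split1 mult.assoc)
  qed
  also have "\<dots> = exp (- k * complex_of_real x) * FF k q x" unfolding FF_def by simp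
  also have "integral {x..1} ?h = integral {x..1} (\<lambda>r. exp (k * complex_of_real x) * ?g r)"
  proof (rule integral_cong)
    fix r assume "r \<in> {x..1}"
    then have "x \<le> r" by auto
    then show "?h r = exp (k * complex_of_real x) * ?g r"
      by (simp only: exp_split2 mult.assoc)
  qed
  also have "\<dots> = exp (k * complex_of_real x) * integral {x..1} ?g" by simp
  also have "integral {x..1} ?g = GG k q x"
    unfolding GG_def using Henstock_Kurzweil_Integration.integral_combine[OF _ _ ig, of x] x by (auto simp: algebra_simps)
  finally show ?thesis .
qed

lemma FF_vd:
  assumes q: "continuous_on II q" and x: "x \<in> II"
  shows "(FF k q has_vector_derivative exp (k * complex_of_real x) * q x) (at x within II)"
  unfolding FF_def[abs_def]
  by (rule integral_has_vector_derivative[where f="\<lambda>r. exp (k * complex_of_real r) * q r", OF _ x])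
     (use q in \<open>auto intro!: continuous_intros\<close>)

lemma GG_vd:
  assumes q: "continuous_on II q" and x: "x \<in> II"
  shows "(GG k q has_vector_derivative - (exp (- k * complex_of_real x) * q x)) (at x within II)"
proof -
  have "((\<lambda>u. integral {-1..u} (\<lambda>r. exp (- k * complex_of_real r) * q r)) has_vector_derivative exp (- k * complex_of_real x) * q x) (at x within II)"
    by (rule integral_has_vector_derivative[where f="\<lambda>r. exp (- k * complex_of_real r) * q r", OF _ x])
     (use q in \<open>auto intro!: continuous_intros\<close>)
  then have "((\<lambda>u. integral {-1..1} (\<lambda>r. exp (- k * complex_of_real r) * q r) - integral {-1..u} (\<lambda>r. exp (- k * complex_of_real r) * q r)) has_vector_derivative 0 - exp (- k * complex_of_real x) * q x) (at x within II)"
    by (intro has_vector_derivative_diff has_vector_derivative_const)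
  then show ?thesis unfolding GG_def[abs_def] by simp
qed

definition UU where "UU k q x = exp (- k * complex_of_real x) * FF k q x + exp (k * complex_of_real x) * GG k q x"
definition UU1 where "UU1 k q x = - k * exp (- k * complex_of_real x) * FF k q x + k * exp (k * complex_of_real x) * GG k q x"

lemma UU_vd:
  assumes q: "continuous_on II q" and x: "x \<in> II"
  shows "(UU k q has_vector_derivative UU1 k q x) (at x within II)"
proof -
  note e1 = exp_vd[of "- k" x II] and e2 = exp_vd[of k x II]
  note m1 = has_vector_derivative_mult[OF e1 FF_vd[OF q x, of k]]
  note m2 = has_vector_derivative_mult[OF e2 GG_vd[OF q x, of k]]
  note a = has_vector_derivative_add[OF m1 m2]
  have eq1: "exp (- k * complex_of_real x) * (exp (k * complex_of_real x) * q x) = q x"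
    by (simp only: mult.assoc[symmetric] exp_inv1 mult_1)
  have eq2: "exp (k * complex_of_real x) * (- (exp (- k * complex_of_real x) * q x)) = - q x"
    by (simp only: mult_minus_right mult.assoc[symmetric] exp_inv2 mult_1)
  have U: "(\<lambda>x. exp (- k * complex_of_real x) * FF k q x + exp (k * complex_of_real x) * GG k q x) = UU k q"
    unfolding UU_def ..
  have "UU1 k q x = (exp (- k * complex_of_real x) * (exp (k * complex_of_real x) * q x) + - k * exp (- k * complex_of_real x) * FF k q x) +
     (exp (k * complex_of_real x) * (- (exp (- k * complex_of_real x) * q x)) + k * exp (k * complex_of_real x) * GG k q x)"
    unfolding eq1 eq2 UU1_def by (simp add: algebra_simps)
  then show ?thesis using a unfolding U by (rule_tac vd_rhs) auto
qed

lemma UU1_vd: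
  assumes q: "continuous_on II q" and x: "x \<in> II"
  shows "(UU1 k q has_vector_derivative k^2 * UU k q x - 2 * k * q x) (at x within II)"
proof -
  note e1 = has_vector_derivative_mult_right[OF exp_vd[of "- k" x II], of "- k"]
  note e2 = has_vector_derivative_mult_right[OF exp_vd[of k x II], of k]
  note m1 = has_vector_derivative_mult[OF e1 FF_vd[OF q x, of k]]
  note m2 = has_vector_derivative_mult[OF e2 GG_vd[OF q x, of k]]
  note a = has_vector_derivative_add[OF m1 m2]
  have eq1: "- k * exp (- k * complex_of_real x) * (exp (k * complex_of_real x) * q x) = - k * q x"
    by (simp only: mult.assoc exp_inv1 mult_1 flip: mult.assoc[of "exp (- k * complex_of_real x)"])
  have eq2: "k * exp (k * complex_of_real x) * (- (exp (- k * complex_of_real x) * q x)) = - (k * q x)"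
    by (simp only: mult_minus_right mult.assoc exp_inv2 mult_1 flip: mult.assoc[of "exp (k * complex_of_real x)"])
  have U: "(\<lambda>x. - k * exp (- k * complex_of_real x) * FF k q x + k * exp (k * complex_of_real x) * GG k q x) = UU1 k q"
    unfolding UU1_def ..
  have "k^2 * UU k q x - 2 * k * q x = (- k * exp (- k * complex_of_real x) * (exp (k * complex_of_real x) * q x) + - k * (- k * exp (- k * complex_of_real x)) * FF k q x) +
     (k * exp (k * complex_of_real x) * (- (exp (- k * complex_of_real x) * q x)) + k * (k * exp (k * complex_of_real x)) * GG k q x)"
    unfolding eq1 eq2 UU_def by (simp add: algebra_simps power2_eq_square)
  then show ?thesis using a unfolding U by (rule_tac vd_rhs) auto
qed


lemma Cn_on_0_cont: "Cn_on n q \<Longrightarrow> continuous_on II q"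
  using Cn_on_mono[of n q 0] unfolding Cn_on_def by simp

lemma Kop_reg:
  assumes q: "Cn_on n q"
  shows "Cn_on (n+2) (Kop k q)"
    and "\<And>j x. j \<le> n \<Longrightarrow> x \<in> II \<Longrightarrow> dnth (j+2) (Kop k q) x = k^2 * dnth j (Kop k q) x + (- 2 * k) * dnth j q x"
proof -
  have qc: "continuous_on II q" using Cn_on_0_cont[OF q] .
  have KU: "Kop k q x = UU k q x" if "x \<in> II" for x
    using Kop_split[OF qc that] unfolding UU_def by simp
  define g where "g = (\<lambda>x. k^2 * Kop k q x + (- 2 * k) * q x)"
  have d1: "\<forall>x\<in>II. (Kop k q has_vector_derivative UU1 k q x) (at x within II)"
  proof
    fix x assume x: "x \<in> II"
    show "(Kop k q has_vector_derivative UU1 k q x) (at x within II)"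
      using UU_vd[OF qc x] by (rule vd_transf) (use x KU in auto)
  qed
  have d2: "\<forall>x\<in>II. (UU1 k q has_vector_derivative g x) (at x within II)"
  proof
    fix x assume x: "x \<in> II"
    show "(UU1 k q has_vector_derivative g x) (at x within II)"
      using UU1_vd[OF qc x, of k] unfolding g_def KU[OF x] by (rule vd_rhs) simp
  qed
  have K0: "Cn_on 0 (Kop k q)" unfolding Cn_on_def
    using d1 by (auto intro: continuous_on_vector_derivative)
  have main: "Cn_on (m+2) (Kop k q)" if "m \<le> n" for m
    using that
  proof (induction m)
    case 0
    have "Cn_on 0 g" unfolding g_def by (rule lin2(1)[OF K0 Cn_on_mono[OF q]]) simp
    then show ?case using shift_Cn[OF d1 d2] by simp
  next
    case (Suc m)
    have a: "Cn_on (Suc m) (Kop k q)" using Cn_on_mono[OF Suc.IH] Suc.prems by simp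
    have b: "Cn_on (Suc m) q" using Cn_on_mono[OF q] Suc.prems by simp
    have "Cn_on (Suc m) g" unfolding g_def by (rule lin2(1)[OF a b])
    then show ?case using shift_Cn[OF d1 d2] by simp
  qed
  then show "Cn_on (n+2) (Kop k q)" by simp
  fix j x assume j: "j \<le> n" and x: "x \<in> II"
  have Kn: "Cn_on n (Kop k q)" using Cn_on_mono[OF main[of n]] by simp
  have "dnth (j+2) (Kop k q) x = dnth j g x" using shift_dnth(2)[OF d1 d2 x] .
  also have "\<dots> = k^2 * dnth j (Kop k q) x + (- 2 * k) * dnth j q x"
    unfolding g_def by (rule lin2(2)[OF Kn q j x])
  finally show "dnth (j+2) (Kop k q) x = k^2 * dnth j (Kop k q) x + (- 2 * k) * dnth j q x" .
qed

lemma Kop_even: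
  assumes q: "Cn_on n q" and m: "2 * m \<le> n + 2" and x: "x \<in> II"
  shows "dnth (2*m) (Kop k q) x = (k^2)^m * Kop k q x - 2 * k * (\<Sum>j<m. (k^2)^(m-1-j) * dnth (2*j) q x)"
  using m
proof (induction m)
  case 0 then show ?case by simp
next
  case (Suc m)
  have "dnth (2 * Suc m) (Kop k q) x = dnth (2*m + 2) (Kop k q) x" by (simp add: algebra_simps)
  also have "\<dots> = k^2 * dnth (2*m) (Kop k q) x + (- 2 * k) * dnth (2*m) q x"
    using Suc.prems by (intro Kop_reg(2)[OF q _ x]) simp
  also have "dnth (2*m) (Kop k q) x = (k^2)^m * Kop k q x - 2 * k * (\<Sum>j<m. (k^2)^(m-1-j) * dnth (2*j) q x)"
    using Suc by simp
  also have "k^2 * ((k^2)^m * Kop k q x - 2 * k * (\<Sum>j<m. (k^2)^(m-1-j) * dnth (2*j) q x)) + (- 2 * k) * dnth (2*m) q x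
     = (k^2)^(Suc m) * Kop k q x - 2 * k * ((\<Sum>j<m. k^2 * (k^2)^(m-1-j) * dnth (2*j) q x) + dnth (2*m) q x)"
    by (simp add: algebra_simps sum_distrib_left)
  also have "(\<Sum>j<m. k^2 * (k^2)^(m-1-j) * dnth (2*j) q x) = (\<Sum>j<m. (k^2)^(Suc m-1-j) * dnth (2*j) q x)"
  proof (rule sum.cong)
    fix j assume "j \<in> {..<m}"
    then have "Suc m - 1 - j = Suc (m - 1 - j)" by auto
    then show "k^2 * (k^2)^(m-1-j) * dnth (2*j) q x = (k^2)^(Suc m-1-j) * dnth (2*j) q x" by simp
  qed simp
  also have "(\<Sum>j<m. (k^2)^(Suc m-1-j) * dnth (2*j) q x) + dnth (2*m) q x = (\<Sum>j<Suc m. (k^2)^(Suc m-1-j) * dnth (2*j) q x)"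
    by simp
  finally show ?case .
qed

definition AA :: "complex \<Rightarrow> real \<Rightarrow> real \<Rightarrow> complex" where
  "AA lam \<alpha> \<tau>0 = (lam + complex_of_real \<alpha>) * exp (lam * complex_of_real \<tau>0)"

lemma Delta_alt: "Delta N \<alpha> \<tau>0 c \<mu> lam q = (\<lambda>x. AA lam \<alpha> \<tau>0 * q x + (-1) * (\<Sum>i<N. c i * Kop (lam + \<mu> i) q x))"
  unfolding Delta_def[abs_def] AA_def by simp

lemma Delta_reg:
  assumes q: "Cn_on n q"
  shows "Cn_on n (Delta N \<alpha> \<tau>0 c \<mu> lam q)"
    and "\<And>m x. 2 * m \<le> n \<Longrightarrow> x \<in> II \<Longrightarrow> dnth (2*m) (Delta N \<alpha> \<tau>0 c \<mu> lam q) x =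
      AA lam \<alpha> \<tau>0 * dnth (2*m) q x - (\<Sum>i<N. c i * (((lam + \<mu> i)^2)^m * Kop (lam + \<mu> i) q x
         - 2 * (lam + \<mu> i) * (\<Sum>j<m. ((lam + \<mu> i)^2)^(m-1-j) * dnth (2*j) q x)))"
proof -
  have Ki: "Cn_on n (Kop (lam + \<mu> i) q)" for i using Cn_on_mono[OF Kop_reg(1)[OF q]] by simp
  note S = linsum[where S="{..<N}" and f="\<lambda>i. Kop (lam + \<mu> i) q" and a=c and n=n, OF finite_lessThan Ki]
  note L = lin2[OF q S(1), where a="AA lam \<alpha> \<tau>0" and b="-1"]
  show "Cn_on n (Delta N \<alpha> \<tau>0 c \<mu> lam q)" unfolding Delta_alt by (rule L(1))
  fix m x assume m: "2 * m \<le> n" and x: "x \<in> II"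
  have "dnth (2*m) (Delta N \<alpha> \<tau>0 c \<mu> lam q) x = AA lam \<alpha> \<tau>0 * dnth (2*m) q x + (-1) * (\<Sum>i<N. c i * dnth (2*m) (Kop (lam + \<mu> i) q) x)"
    unfolding Delta_alt using L(2)[OF m x] S(2)[OF m x] by simp
  also have "(\<Sum>i<N. c i * dnth (2*m) (Kop (lam + \<mu> i) q) x) = (\<Sum>i<N. c i * (((lam + \<mu> i)^2)^m * Kop (lam + \<mu> i) q x
         - 2 * (lam + \<mu> i) * (\<Sum>j<m. ((lam + \<mu> i)^2)^(m-1-j) * dnth (2*j) q x)))"
    using m by (intro sum.cong refl) (simp add: Kop_even[OF q _ x])
  finally show "dnth (2*m) (Delta N \<alpha> \<tau>0 c \<mu> lam q) x =
      AA lam \<alpha> \<tau>0 * dnth (2*m) q x - (\<Sum>i<N. c i * (((lam + \<mu> i)^2)^m * Kop (lam + \<mu> i) q x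
         - 2 * (lam + \<mu> i) * (\<Sum>j<m. ((lam + \<mu> i)^2)^(m-1-j) * dnth (2*j) q x)))" by simp
qed


lemma sum_lt_ext: fixes m N :: nat shows "m \<le> N \<Longrightarrow> (\<Sum>j<m. f j) = (\<Sum>j\<le>N. if j < m then f j else (0::'a::comm_monoid_add))"
proof -
  assume m: "m \<le> N"
  have "(\<Sum>j\<le>N. if j < m then f j else 0) = sum f {j \<in> {..N}. j < m}"
    by (rule sum.inter_filter[symmetric]) simp
  also have "{j \<in> {..N}. j < m} = {..<m}" using m by auto
  finally show ?thesis by simp
qed

lemma alg:
  fixes P Dq u c kk :: "nat \<Rightarrow> complex" and A :: complex
  assumes root: "\<And>i. i < N \<Longrightarrow> (\<Sum>m\<le>N. P m * (kk i^2)^m) = 0"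
  shows "(\<Sum>m\<le>N. P m * (A * Dq m - (\<Sum>i<N. c i * ((kk i^2)^m * u i - 2 * kk i * (\<Sum>j<m. (kk i^2)^(m-1-j) * Dq j)))))
   = (\<Sum>j\<le>N. (A * P j + (\<Sum>i<N. 2 * c i * kk i * (\<Sum>m\<le>N. if j < m then P m * (kk i^2)^(m-1-j) else 0))) * Dq j)"
proof -
  define T where "T m i j = (if j < m then P m * c i * 2 * kk i * (kk i^2)^(m-1-j) * Dq j else 0)" for m i j
  have pm: "P m * (A * Dq m - (\<Sum>i<N. c i * ((kk i^2)^m * u i - 2 * kk i * (\<Sum>j<m. (kk i^2)^(m-1-j) * Dq j))))
     = P m * A * Dq m - (\<Sum>i<N. P m * (kk i^2)^m * (c i * u i)) + (\<Sum>i<N. \<Sum>j\<le>N. T m i j)" if m: "m \<le> N" for m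
  proof -
    have "(\<Sum>i<N. c i * ((kk i^2)^m * u i - 2 * kk i * (\<Sum>j<m. (kk i^2)^(m-1-j) * Dq j)))
       = (\<Sum>i<N. (kk i^2)^m * (c i * u i)) - (\<Sum>i<N. c i * 2 * kk i * (\<Sum>j<m. (kk i^2)^(m-1-j) * Dq j))"
      by (simp add: algebra_simps sum_subtractf)
    moreover have "P m * (c i * 2 * kk i * (\<Sum>j<m. (kk i^2)^(m-1-j) * Dq j)) = (\<Sum>j\<le>N. T m i j)" for i
      unfolding T_def sum_lt_ext[OF m] by (simp add: sum_distrib_left algebra_simps if_distrib cong: if_cong)
    ultimately show ?thesis
      by (simp add: right_diff_distrib sum_distrib_left mult.assoc)
  qed
  have "(\<Sum>m\<le>N. P m * (A * Dq m - (\<Sum>i<N. c i * ((kk i^2)^m * u i - 2 * kk i * (\<Sum>j<m. (kk i^2)^(m-1-j) * Dq j)))))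
     = (\<Sum>m\<le>N. P m * A * Dq m) - (\<Sum>m\<le>N. \<Sum>i<N. P m * (kk i^2)^m * (c i * u i)) + (\<Sum>m\<le>N. \<Sum>i<N. \<Sum>j\<le>N. T m i j)"
  proof -
    have "(\<Sum>m\<le>N. P m * (A * Dq m - (\<Sum>i<N. c i * ((kk i^2)^m * u i - 2 * kk i * (\<Sum>j<m. (kk i^2)^(m-1-j) * Dq j)))))
      = (\<Sum>m\<le>N. P m * A * Dq m - (\<Sum>i<N. P m * (kk i^2)^m * (c i * u i)) + (\<Sum>i<N. \<Sum>j\<le>N. T m i j))"
      by (rule sum.cong[OF refl], rule pm) simp
    then show ?thesis by (simp only: sum.distrib sum_subtractf)
  qed
  also have "(\<Sum>m\<le>N. \<Sum>i<N. P m * (kk i^2)^m * (c i * u i)) = (\<Sum>i<N. (\<Sum>m\<le>N. P m * (kk i^2)^m) * (c i * u i))"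
    by (subst sum.swap) (simp add: sum_distrib_right)
  also have "\<dots> = 0" using root by simp
  also have "(\<Sum>m\<le>N. \<Sum>i<N. \<Sum>j\<le>N. T m i j) = (\<Sum>j\<le>N. \<Sum>i<N. \<Sum>m\<le>N. T m i j)"
  proof -
    have "(\<Sum>m\<le>N. \<Sum>i<N. \<Sum>j\<le>N. T m i j) = (\<Sum>m\<le>N. \<Sum>j\<le>N. \<Sum>i<N. T m i j)"
      by (rule sum.cong[OF refl]) (rule sum.swap)
    also have "\<dots> = (\<Sum>j\<le>N. \<Sum>m\<le>N. \<Sum>i<N. T m i j)" by (rule sum.swap)
    also have "\<dots> = (\<Sum>j\<le>N. \<Sum>i<N. \<Sum>m\<le>N. T m i j)"
      by (rule sum.cong[OF refl]) (rule sum.swap)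
    finally show ?thesis .
  qed
  also have "(\<Sum>j\<le>N. \<Sum>i<N. \<Sum>m\<le>N. T m i j) = (\<Sum>j\<le>N. (\<Sum>i<N. 2 * c i * kk i * (\<Sum>m\<le>N. if j < m then P m * (kk i^2)^(m-1-j) else 0)) * Dq j)"
    unfolding T_def by (simp add: sum_distrib_left sum_distrib_right algebra_simps if_distrib cong: if_cong)
  finally show ?thesis by (simp add: algebra_simps sum.distrib sum_distrib_right)
qed


definition PP :: "nat \<Rightarrow> (nat \<Rightarrow> complex) \<Rightarrow> complex poly" where
  "PP N kk = (\<Prod>i<N. [:-(kk i^2), 1:])"

lemma PP_deg: "degree (PP N kk) = N"
proof -
  have "degree (PP N kk) = (\<Sum>i<N. degree [:-(kk i^2), 1:])"
    unfolding PP_def by (rule degree_prod_eq_sum_degree) auto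
  then show ?thesis by simp
qed

lemma PP_lead: "coeff (PP N kk) N = 1"
proof -
  have "lead_coeff (PP N kk) = (\<Prod>i<N. lead_coeff [:-(kk i^2), 1:])"
    unfolding PP_def by (rule lead_coeff_prod)
  then show ?thesis by (simp add: PP_deg)
qed

lemma PP_root: "i < N \<Longrightarrow> poly (PP N kk) (kk i^2) = 0"
  unfolding PP_def poly_prod by (rule prod_zero) auto

lemma PP_sum: "(\<Sum>m\<le>N. coeff (PP N kk) m * z^m) = poly (PP N kk) z"
  by (simp add: poly_altdef PP_deg)

definition zeta where "zeta N kk = map (coeff (PP N kk)) [0..<N]"
definition betaf where "betaf N kk c A j = A * coeff (PP N kk) j +
   (\<Sum>i<N. 2 * c i * kk i * (\<Sum>m\<le>N. if j < m then coeff (PP N kk) m * (kk i^2)^(m-1-j) else 0))"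
definition beta where "beta N kk c A = map (betaf N kk c A) [0..<Suc N]"

lemma existence:
  fixes lam :: complex and \<mu> :: "nat \<Rightarrow> complex"
  assumes q: "Cn_on (2*N) q" and x: "x \<in> II"
  defines "kk \<equiv> \<lambda>i. lam + \<mu> i"
  shows "(\<Sum>k<N. zeta N kk ! k * dnth (2*k) (Delta N \<alpha> \<tau>0 c \<mu> lam q) x)
                   + dnth (2*N) (Delta N \<alpha> \<tau>0 c \<mu> lam q) x
                 = (\<Sum>k\<le>N. beta N kk c (AA lam \<alpha> \<tau>0) ! k * dnth (2*k) q x)"
proof -
  let ?P = "coeff (PP N kk)"
  let ?D = "\<lambda>m. dnth (2*m) (Delta N \<alpha> \<tau>0 c \<mu> lam q) x"
  have "(\<Sum>k<N. zeta N kk ! k * ?D k) + ?D N = (\<Sum>k<N. ?P k * ?D k) + ?P N * ?D N"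
    by (simp add: zeta_def PP_lead)
  also have "\<dots> = (\<Sum>m\<le>N. ?P m * ?D m)"
    by (simp add: lessThan_Suc_atMost[symmetric])
  also have "\<dots> = (\<Sum>m\<le>N. ?P m * (AA lam \<alpha> \<tau>0 * dnth (2*m) q x - (\<Sum>i<N. c i * ((kk i^2)^m * Kop (kk i) q x
         - 2 * kk i * (\<Sum>j<m. (kk i^2)^(m-1-j) * dnth (2*j) q x)))))"
    by (rule sum.cong[OF refl]) (simp add: Delta_reg(2)[OF q _ x] kk_def)
  also have "\<dots> = (\<Sum>j\<le>N. betaf N kk c (AA lam \<alpha> \<tau>0) j * dnth (2*j) q x)"
    unfolding betaf_def
    by (rule alg) (simp add: PP_sum PP_root)
  also have "\<dots> = (\<Sum>k\<le>N. beta N kk c (AA lam \<alpha> \<tau>0) ! k * dnth (2*k) q x)"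
    unfolding beta_def by (rule sum.cong[OF refl]) (simp add: nth_map less_Suc_eq_le del: upt_Suc)
  finally show ?thesis .
qed


definition EF :: "complex poly \<Rightarrow> complex \<Rightarrow> real \<Rightarrow> complex" where
  "EF p s r = poly p (complex_of_real r) * exp (s * complex_of_real r)"

definition Dop :: "complex \<Rightarrow> complex poly \<Rightarrow> complex poly" where
  "Dop s p = pderiv p + smult s p"

lemma EF_vd: "(EF p s has_vector_derivative EF (Dop s p) s x) (at x within S)"
proof -
  have "((\<lambda>z. poly p z * exp (s * z)) has_field_derivative
      poly (pderiv p) (complex_of_real x) * exp (s * complex_of_real x) + poly p (complex_of_real x) * (s * exp (s * complex_of_real x)))
      (at (complex_of_real x))"
    by (auto intro!: derivative_eq_intros simp: algebra_simps)
  then have "(EF p s has_vector_derivative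
      poly (pderiv p) (complex_of_real x) * exp (s * complex_of_real x) + poly p (complex_of_real x) * (s * exp (s * complex_of_real x))) (at x within S)"
    unfolding EF_def[abs_def] by (rule has_vector_derivative_real_field)
  then show ?thesis by (rule vd_rhs) (simp add: EF_def Dop_def algebra_simps)
qed

lemma EF_dnth: "x \<in> II \<Longrightarrow> dnth j (EF p s) x = EF ((Dop s ^^ j) p) s x"
proof (induction j arbitrary: x)
  case 0 then show ?case by simp
next
  case (Suc j)
  have "dnth (Suc j) (EF p s) x = vector_derivative (EF ((Dop s ^^ j) p) s) (at x within II)"
    unfolding dnth_Suc_eq using Suc by (intro vd_cong) auto
  also have "\<dots> = EF (Dop s ((Dop s ^^ j) p)) s x"
    by (rule vd_eq[OF Suc.prems EF_vd])
  finally show ?case by simp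
qed

lemma EF_Cn: "Cn_on n (EF p s)"
  unfolding Cn_on_def
proof (intro conjI allI impI ballI)
  fix k x assume x: "x \<in> II"
  have "(EF ((Dop s ^^ k) p) s has_vector_derivative EF (Dop s ((Dop s ^^ k) p)) s x) (at x within II)"
    by (rule EF_vd)
  then have "(EF ((Dop s ^^ k) p) s has_vector_derivative dnth (Suc k) (EF p s) x) (at x within II)"
    using EF_dnth[OF x, of "Suc k"] by simp
  then show "(dnth k (EF p s) has_vector_derivative dnth (Suc k) (EF p s) x) (at x within II)"
    by (rule vd_transf) (use x EF_dnth in auto)
next
  have "continuous_on II (EF ((Dop s ^^ n) p) s)"
    by (rule continuous_on_vector_derivative) (rule EF_vd)
  then show "continuous_on II (dnth n (EF p s))"
    by (rule cont_transf) (use EF_dnth in auto)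
qed

lemma Dop_dvd:
  assumes "[:1,1:]^(Suc M) dvd p"
  shows "[:1,1:]^M dvd Dop s p"
proof -
  obtain r where r: "p = [:1,1:]^(Suc M) * r" using assms by (auto elim: dvdE)
  have "pderiv p = [:1,1:]^(Suc M) * pderiv r + r * (smult (of_nat (Suc M)) ([:1,1:]^M) * pderiv [:1,1:])"
    unfolding r pderiv_mult pderiv_power_Suc ..
  also have "[:1,1:]^M dvd \<dots>"
    by (intro dvd_add dvd_mult2 dvd_mult dvd_smult) (auto simp del: power_Suc intro: dvd_power_le)
  finally have a: "[:1,1:]^M dvd pderiv p" .
  have b: "[:1,1:]^M dvd smult s p" unfolding r
    by (intro dvd_smult dvd_mult2) (auto simp del: power_Suc intro: dvd_power_le)
  show ?thesis unfolding Dop_def using a b by (rule dvd_add)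
qed

lemma Dop_iter_dvd: "[:1,1:]^M dvd p \<Longrightarrow> j \<le> M \<Longrightarrow> [:1,1:]^(M-j) dvd (Dop s ^^ j) p"
proof (induction j)
  case 0 then show ?case by simp
next
  case (Suc j)
  then have "[:1,1:]^(Suc (M - Suc j)) dvd (Dop s ^^ j) p" by (simp add: Suc_diff_Suc)
  then show ?case by (simp add: Dop_dvd)
qed

lemma EF_vanish: "[:1,1:]^M dvd p \<Longrightarrow> j < M \<Longrightarrow> dnth j (EF p s) (-1) = 0"
proof -
  assume a: "[:1,1:]^M dvd p" and j: "j < M"
  have "[:1,1:]^(M-j) dvd (Dop s ^^ j) p" using Dop_iter_dvd[OF a] j by simp
  moreover have "[:1,1:] dvd [:1,1:]^(M-j)" using j by (simp add: dvd_power)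
  ultimately have "[:1,1:] dvd (Dop s ^^ j) p" by (rule dvd_trans[rotated])
  then obtain r where r: "(Dop s ^^ j) p = [:1,1:] * r" by (auto elim: dvdE)
  have "dnth j (EF p s) (-1) = EF ((Dop s ^^ j) p) s (-1)" by (rule EF_dnth) simp
  also have "\<dots> = 0" unfolding EF_def r by simp
  finally show ?thesis .
qed

lemma Dop_const: "(Dop s ^^ j) [:1:] = [:s^j:]"
  by (induction j) (simp_all add: Dop_def)

lemma EF_exp: "x \<in> II \<Longrightarrow> dnth j (EF [:1:] s) x = s^j * exp (s * complex_of_real x)"
  by (simp add: EF_dnth Dop_const EF_def)


definition LZ :: "nat \<Rightarrow> (real \<Rightarrow> complex) \<Rightarrow> bool" where
  "LZ n g \<longleftrightarrow> (\<forall>j. Cn_on j g) \<and> (\<forall>l<n. dnth l g (-1) = 0)"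

lemma LZ_lin2: "LZ n f \<Longrightarrow> LZ n g \<Longrightarrow> LZ n (\<lambda>x. a * f x + b * g x)"
  unfolding LZ_def
proof (intro conjI allI impI)
  fix j assume "(\<forall>j. Cn_on j f) \<and> (\<forall>l<n. dnth l f (- 1) = 0)" "(\<forall>j. Cn_on j g) \<and> (\<forall>l<n. dnth l g (- 1) = 0)"
  then show "Cn_on j (\<lambda>x. a * f x + b * g x)" by (intro lin2(1)) auto
next
  fix l assume f: "(\<forall>j. Cn_on j f) \<and> (\<forall>l<n. dnth l f (- 1) = 0)" and g: "(\<forall>j. Cn_on j g) \<and> (\<forall>l<n. dnth l g (- 1) = 0)" and l: "l < n"
  have "dnth l (\<lambda>x. a * f x + b * g x) (-1) = a * dnth l f (-1) + b * dnth l g (-1)"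
    using f g by (intro lin2(2)[of l]) auto
  then show "dnth l (\<lambda>x. a * f x + b * g x) (- 1) = 0" using f g l by simp
qed

lemma LZ_sum: "finite S \<Longrightarrow> (\<And>i. i \<in> S \<Longrightarrow> LZ n (f i)) \<Longrightarrow> LZ n (\<lambda>x. \<Sum>i\<in>S. a i * f i x)"
  unfolding LZ_def
proof (intro conjI allI impI)
  fix j assume "finite S" "\<And>i. i \<in> S \<Longrightarrow> (\<forall>j. Cn_on j (f i)) \<and> (\<forall>l<n. dnth l (f i) (- 1) = 0)"
  then show "Cn_on j (\<lambda>x. \<Sum>i\<in>S. a i * f i x)" by (intro linsum(1)) auto
next
  fix l assume S: "finite S" and f: "\<And>i. i \<in> S \<Longrightarrow> (\<forall>j. Cn_on j (f i)) \<and> (\<forall>l<n. dnth l (f i) (- 1) = 0)" and l: "l < n"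
  have "dnth l (\<lambda>x. \<Sum>i\<in>S. a i * f i x) (-1) = (\<Sum>i\<in>S. a i * dnth l (f i) (-1))"
    using S f by (intro linsum(2)[of S l]) auto
  then show "dnth l (\<lambda>x. \<Sum>i\<in>S. a i * f i x) (- 1) = 0" using f l by simp
qed

lemma LZ_dnth: "LZ n g \<Longrightarrow> j \<le> n \<Longrightarrow> LZ (n - j) (dnth j g)"
  unfolding LZ_def
proof (intro conjI allI impI)
  fix i assume "(\<forall>j. Cn_on j g) \<and> (\<forall>l<n. dnth l g (- 1) = 0)"
  then show "Cn_on i (dnth j g)" by (intro Cn_on_dnth) auto
next
  fix l assume "(\<forall>j. Cn_on j g) \<and> (\<forall>l<n. dnth l g (- 1) = 0)" "j \<le> n" "l < n - j"
  then show "dnth l (dnth j g) (- 1) = 0" by (simp add: dnth_add[symmetric])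
qed

lemma LZ_mono: "LZ n g \<Longrightarrow> m \<le> n \<Longrightarrow> LZ m g"
  unfolding LZ_def by auto

lemma LZ_EF: "LZ M (EF ([:1,1:]^M) s)"
  unfolding LZ_def using EF_Cn EF_vanish[OF dvd_refl] by auto

lemma int_pow_nz: "integral II (\<lambda>r. complex_of_real ((r + 1)^M)) \<noteq> 0"
proof -
  have "((\<lambda>r. complex_of_real ((r + 1)^M)) has_integral
     (complex_of_real ((1 + 1)^(Suc M) / real (Suc M)) - complex_of_real ((-1 + 1)^(Suc M) / real (Suc M)))) II"
  proof (rule fundamental_theorem_of_calculus)
    fix x :: real assume "x \<in> II"
    have "((\<lambda>r. (r + 1)^(Suc M) / real (Suc M)) has_real_derivative (x + 1)^M) (at x within II)"
      by (auto intro!: derivative_eq_intros simp del: power_Suc of_nat_Suc)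
    then show "((\<lambda>r. complex_of_real ((r + 1)^(Suc M) / real (Suc M))) has_vector_derivative complex_of_real ((x + 1)^M)) (at x within II)"
      by (rule has_vector_derivative_of_real)
  qed simp
  then have "integral II (\<lambda>r. complex_of_real ((r + 1)^M)) = complex_of_real (2^(Suc M) / real (Suc M))"
    by (simp add: integral_unique)
  moreover have "(1::complex) + of_nat M \<noteq> 0" using of_nat_neq_0[of M, where 'a=complex] by simp
  ultimately show ?thesis by simp
qed

lemma Kop_EF_m1:
  "Kop k (EF ([:1,1:]^M) k) (-1) = exp (- k) * integral II (\<lambda>r. complex_of_real ((r + 1)^M))"
proof -
  have "Kop k (EF ([:1,1:]^M) k) (-1) = integral II (\<lambda>r. exp (- k) * complex_of_real ((r + 1)^M))"
    unfolding Kop_def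
  proof (rule integral_cong)
    fix r assume r: "r \<in> II"
    then have "\<bar>-1 - r\<bar> = r + 1" by auto
    then have "exp (- k * complex_of_real \<bar>- 1 - r\<bar>) * exp (k * complex_of_real r) = exp (- k)"
      by (simp add: algebra_simps flip: exp_add)
    moreover have "poly ([:1,1:]^M) (complex_of_real r) = complex_of_real ((r + 1)^M)"
      by (simp add: poly_power algebra_simps)
    ultimately show "exp (- k * complex_of_real \<bar>- 1 - r\<bar>) * EF ([:1, 1:] ^ M) k r = exp (- k) * complex_of_real ((r + 1) ^ M)"
      unfolding EF_def by (metis mult.commute mult.left_commute)
  qed
  then show ?thesis by simp
qed

lemma Kop_EF_nz: "Kop k (EF ([:1,1:]^M) k) (-1) \<noteq> 0"
  unfolding Kop_EF_m1 using int_pow_nz by simp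


lemma alg2:
  fixes d c u K k a :: "nat \<Rightarrow> complex" and S :: "nat \<Rightarrow> nat \<Rightarrow> complex"
  assumes "(\<Sum>m<N. d m * (a m - (\<Sum>i<N. c i * (K i ^ m * u i - 2 * k i * S i m)))) = E"
  shows "(\<Sum>i<N. (c i * (\<Sum>m<N. d m * K i ^ m)) * u i) = 1 * (\<Sum>m<N. d m * (a m + 1 * (\<Sum>i<N. (c i * (2 * k i)) * S i m))) + (-1) * E"
proof -
  have 1: "(\<Sum>m<N. d m * (a m - (\<Sum>i<N. c i * (K i ^ m * u i - 2 * k i * S i m)))) = (\<Sum>m<N. d m * (a m + 1 * (\<Sum>i<N. (c i * (2 * k i)) * S i m))) - (\<Sum>m<N. \<Sum>i<N. d m * c i * K i ^ m * u i)"
    by (simp add: algebra_simps sum_subtractf sum_distrib_left sum.distrib)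
  have 2: "(\<Sum>i<N. (c i * (\<Sum>m<N. d m * K i ^ m)) * u i) = (\<Sum>m<N. \<Sum>i<N. d m * c i * K i ^ m * u i)"
    by (subst sum.swap) (simp add: sum_distrib_left sum_distrib_right algebra_simps)
  show ?thesis using assms unfolding 1 2 by (simp add: algebra_simps)
qed


lemma step1:
  fixes N :: nat and \<alpha> \<tau>0 :: real and c \<mu> d e :: "nat \<Rightarrow> complex" and lam :: complex
  assumes N: "N \<ge> 1"
    and cnz: "\<forall>i<N. c i \<noteq> 0"
    and sq: "\<forall>i<N. \<forall>j<N. i \<noteq> j \<longrightarrow> (lam + \<mu> i)^2 \<noteq> (lam + \<mu> j)^2"
    and H: "\<And>q x. (\<forall>n. Cn_on n q) \<Longrightarrow> x \<in> II \<Longrightarrow>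
          (\<Sum>m<N. d m * dnth (2*m) (Delta N \<alpha> \<tau>0 c \<mu> lam q) x) = (\<Sum>j\<le>N. e j * dnth (2*j) q x)"
    and i0: "i0 < N"
  shows "(\<Sum>m<N. d m * ((lam + \<mu> i0)^2)^m) = 0"
proof -
  define M where "M = 4 * N"
  define kk where "kk i = lam + \<mu> i" for i
  define q where "q = EF ([:1,1:]^M) (kk i0)"
  define A where "A = AA lam \<alpha> \<tau>0"
  define Qi where "Qi i = (\<Sum>m<N. d m * ((kk i)^2)^m)" for i
  define S where "S i m x = (\<Sum>j<m. ((kk i)^2)^(m-1-j) * dnth (2*j) q x)" for i m x
  have qs: "\<forall>n. Cn_on n q" unfolding q_def using EF_Cn by blast
  have qN: "Cn_on (2*N) q" using qs by blast
  have LZq: "LZ M q" unfolding q_def by (rule LZ_EF)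
  have Kreg: "Cn_on (2*N) (Kop (kk i) q)" for i using Cn_on_mono[OF Kop_reg(1)[OF qN]] by simp
  define W where "W x = (\<Sum>i<N. (c i * Qi i) * Kop (kk i) q x)" for x
  define V where "V x = 1 * (\<Sum>m<N. d m * (A * dnth (2*m) q x + 1 * (\<Sum>i<N. (c i * (2 * kk i)) * S i m x)))
       + (-1) * (\<Sum>j\<le>N. e j * dnth (2*j) q x)" for x
  have WV: "W x = V x" if x: "x \<in> II" for x
  proof -
    have "(\<Sum>m<N. d m * dnth (2*m) (Delta N \<alpha> \<tau>0 c \<mu> lam q) x) = (\<Sum>j\<le>N. e j * dnth (2*j) q x)"
      using H[OF qs x] .
    moreover have "(\<Sum>m<N. d m * dnth (2*m) (Delta N \<alpha> \<tau>0 c \<mu> lam q) x)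
       = (\<Sum>m<N. d m * (A * dnth (2*m) q x - (\<Sum>i<N. c i * (((kk i)^2)^m * Kop (kk i) q x - 2 * kk i * S i m x))))"
      by (rule sum.cong[OF refl]) (simp add: Delta_reg(2)[OF qN _ x] A_def kk_def S_def)
    ultimately have "(\<Sum>m<N. d m * (A * dnth (2*m) q x - (\<Sum>i<N. c i * (((kk i)^2)^m * Kop (kk i) q x - 2 * kk i * S i m x))))
       = (\<Sum>j\<le>N. e j * dnth (2*j) q x)" by simp
    from alg2[OF this] show ?thesis unfolding W_def V_def Qi_def .
  qed
  have LD: "LZ (M - 2*N) (dnth (2*j) q)" if "j \<le> N" for j
    using LZ_mono[OF LZ_dnth[OF LZq, of "2*j"]] that unfolding M_def by simp
  have LS: "LZ (M - 2*N) (S i m)" if "m < N" for i m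
    unfolding S_def[abs_def] by (rule LZ_sum) (use LD that in auto)
  have LV: "LZ (M - 2*N) V"
    unfolding V_def[abs_def]
  proof (rule LZ_lin2)
    show "LZ (M - 2 * N) (\<lambda>x. \<Sum>m<N. d m * (A * dnth (2 * m) q x + 1 * (\<Sum>i<N. c i * (2 * kk i) * S i m x)))"
    proof (rule LZ_sum)
      fix m assume m: "m \<in> {..<N}"
      show "LZ (M - 2 * N) (\<lambda>x. A * dnth (2 * m) q x + 1 * (\<Sum>i<N. c i * (2 * kk i) * S i m x))"
      proof (rule LZ_lin2)
        show "LZ (M - 2 * N) (dnth (2 * m) q)" using LD m by simp
        show "LZ (M - 2 * N) (\<lambda>x. \<Sum>i<N. c i * (2 * kk i) * S i m x)"
          by (rule LZ_sum) (use LS m in auto)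
      qed
    qed simp
    show "LZ (M - 2 * N) (\<lambda>x. \<Sum>j\<le>N. e j * dnth (2 * j) q x)"
      by (rule LZ_sum) (use LD in auto)
  qed
  define U where "U i = Kop (kk i) q (-1)" for i
  have moments: "(\<Sum>i<N. (c i * Qi i) * (((kk i)^2)^n * U i)) = 0" if n: "n < N" for n
  proof -
    have m1: "(-1::real) \<in> II" by simp
    have "dnth (2*n) V (-1) = 0" using LV n unfolding LZ_def M_def by simp
    moreover have "dnth (2*n) W (-1) = dnth (2*n) V (-1)"
      by (rule dnth_cong[OF _ m1]) (use WV in auto)
    moreover have "dnth (2*n) W (-1) = (\<Sum>i<N. (c i * Qi i) * dnth (2*n) (Kop (kk i) q) (-1))"
      unfolding W_def[abs_def] by (rule linsum(2)[OF _ Kreg]) (use n in auto)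
    moreover have "dnth (2*n) (Kop (kk i) q) (-1) = ((kk i)^2)^n * U i" for i
    proof -
      have z: "dnth (2*j) q (-1) = 0" if "j < n" for j
        using LZq that n unfolding LZ_def M_def by auto
      show ?thesis unfolding U_def using n
        by (simp add: Kop_even[OF qN _ m1] z)
    qed
    ultimately show ?thesis by simp
  qed
  define L where "L = (\<Prod>j\<in>{..<N} - {i0}. [:-((kk j)^2), 1:])"
  have degL: "degree L = N - 1"
  proof -
    have "degree L = (\<Sum>j\<in>{..<N} - {i0}. degree [:-((kk j)^2), 1:])"
      unfolding L_def by (rule degree_prod_eq_sum_degree) auto
    then show ?thesis using i0 by simp
  qed
  have polyL: "poly L z = (\<Sum>n<N. coeff L n * z^n)" for z
  proof -
    have "{..N - 1} = {..<N}" using N by auto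
    then show ?thesis by (simp add: poly_altdef degL)
  qed
  have L0: "poly L ((kk i)^2) = 0" if "i < N" "i \<noteq> i0" for i
    unfolding L_def poly_prod by (rule prod_zero) (use that in auto)
  have L1: "poly L ((kk i0)^2) \<noteq> 0"
    unfolding L_def poly_prod using sq i0 by (auto simp: kk_def)
  have "0 = (\<Sum>n<N. coeff L n * (\<Sum>i<N. (c i * Qi i) * (((kk i)^2)^n * U i)))"
    using moments by simp
  also have "\<dots> = (\<Sum>i<N. (c i * Qi i) * U i * poly L ((kk i)^2))"
  proof -
    have "(\<Sum>n<N. coeff L n * (\<Sum>i<N. (c i * Qi i) * (((kk i)^2)^n * U i)))
        = (\<Sum>n<N. \<Sum>i<N. coeff L n * ((c i * Qi i) * (((kk i)^2)^n * U i)))"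
      by (simp add: sum_distrib_left)
    also have "\<dots> = (\<Sum>i<N. \<Sum>n<N. coeff L n * ((c i * Qi i) * (((kk i)^2)^n * U i)))"
      by (rule sum.swap)
    also have "\<dots> = (\<Sum>i<N. (c i * Qi i) * U i * poly L ((kk i)^2))"
      unfolding polyL by (rule sum.cong[OF refl]) (simp add: sum_distrib_left algebra_simps)
    finally show ?thesis .
  qed
  also have "\<dots> = (c i0 * Qi i0) * U i0 * poly L ((kk i0)^2)"
  proof -
    let ?f = "\<lambda>i. (c i * Qi i) * U i * poly L ((kk i)^2)"
    have "sum ?f {..<N} = ?f i0 + sum ?f ({..<N} - {i0})" by (rule sum.remove) (use i0 in auto)
    moreover have "sum ?f ({..<N} - {i0}) = 0" by (rule sum.neutral) (use L0 in auto)
    ultimately show ?thesis by simp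
  qed
  finally have "(c i0 * Qi i0) * U i0 * poly L ((kk i0)^2) = 0" by simp
  moreover have "U i0 \<noteq> 0" unfolding U_def q_def by (rule Kop_EF_nz)
  ultimately have "Qi i0 = 0" using L1 cnz i0 by simp
  then show ?thesis unfolding Qi_def kk_def .
qed


lemma uniq_core:
  fixes N :: nat and \<alpha> \<tau>0 :: real and c \<mu> d e :: "nat \<Rightarrow> complex" and lam :: complex
  assumes N: "N \<ge> 1"
    and cnz: "\<forall>i<N. c i \<noteq> 0"
    and sq: "\<forall>i<N. \<forall>j<N. i \<noteq> j \<longrightarrow> (lam + \<mu> i)^2 \<noteq> (lam + \<mu> j)^2"
    and H: "\<And>q x. (\<forall>n. Cn_on n q) \<Longrightarrow> x \<in> II \<Longrightarrow>
          (\<Sum>m<N. d m * dnth (2*m) (Delta N \<alpha> \<tau>0 c \<mu> lam q) x) = (\<Sum>j\<le>N. e j * dnth (2*j) q x)"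
  shows "\<forall>m<N. d m = 0" and "\<forall>j\<le>N. e j = 0"
proof -
  define Q where "Q = (\<Sum>m<N. monom (d m) m)"
  have polyQ: "poly Q z = (\<Sum>m<N. d m * z^m)" for z
    unfolding Q_def by (simp add: poly_sum poly_monom)
  have degQ: "degree Q \<le> N - 1"
    unfolding Q_def by (rule degree_sum_le) (auto intro: order.trans[OF degree_monom_le])
  define A where "A = (\<lambda>i. (lam + \<mu> i)^2) ` {..<N}"
  have inj: "inj_on (\<lambda>i. (lam + \<mu> i)^2) {..<N}"
    unfolding inj_on_def using sq by blast
  have cardA: "card A = N" unfolding A_def using card_image[OF inj] by simp
  have "Q = 0"
  proof (rule poly_eqI_degree[of A])
    fix z assume "z \<in> A"
    then obtain i where i: "i < N" "z = (lam + \<mu> i)^2" unfolding A_def by auto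
    show "poly Q z = poly 0 z"
      unfolding polyQ i(2) using step1[OF N cnz sq H i(1)] by simp
  qed (use degQ cardA N in auto)
  then have d0: "\<forall>m<N. d m = 0"
  proof (intro allI impI)
    fix m assume "Q = 0" "m < N"
    then have "coeff Q m = 0" by simp
    moreover have "coeff Q m = d m" unfolding Q_def coeff_sum using \<open>m < N\<close> by simp
    ultimately show "d m = 0" by simp
  qed
  then show "\<forall>m<N. d m = 0" .
  define E where "E = (\<Sum>j\<le>N. monom (e j) j)"
  have "poly E z = 0" for z
  proof -
    define s where "s = csqrt z"
    have s: "s^2 = z" unfolding s_def by simp
    let ?q = "EF [:1:] s"
    have "(\<Sum>m<N. d m * dnth (2*m) (Delta N \<alpha> \<tau>0 c \<mu> lam ?q) 0) = (\<Sum>j\<le>N. e j * dnth (2*j) ?q 0)"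
      by (rule H) (use EF_Cn in auto)
    moreover have "(\<Sum>m<N. d m * dnth (2*m) (Delta N \<alpha> \<tau>0 c \<mu> lam ?q) 0) = 0"
      using d0 by simp
    moreover have "dnth (2*j) ?q 0 = z^j" for j
      by (simp add: EF_exp power_mult s[symmetric])
    ultimately have "(\<Sum>j\<le>N. e j * z^j) = 0" by simp
    then show ?thesis unfolding E_def by (simp add: poly_sum poly_monom)
  qed
  then have "E = 0" using poly_all_0_iff_0 by blast
  show "\<forall>j\<le>N. e j = 0"
  proof (intro allI impI)
    fix j assume j: "j \<le> N"
    have "coeff E j = e j" unfolding E_def coeff_sum using j by simp
    then show "e j = 0" using \<open>E = 0\<close> by simp
  qed
qed


lemma lin_aux: "(a::complex) + t = b \<Longrightarrow> c + t = d \<Longrightarrow> a - c = b - d"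
proof -
  assume h1: "a + t = b" and h2: "c + t = d"
  have "b - d = (a + t) - (c + t)" by (simp only: h1 h2)
  then show ?thesis by simp
qed

theorem lemma3p12:
  fixes N :: nat and \<alpha> \<tau>0 :: real and c \<mu> :: "nat \<Rightarrow> complex" and lam :: complex
  assumes "N \<ge> 1" and "\<alpha> > 0" and "\<tau>0 \<ge> 0"
    and "\<forall>i<N. c i \<noteq> 0"
    and "inj_on \<mu> {..<N}"
    and "\<forall>i<N. \<forall>j<N. i \<noteq> j \<longrightarrow> (lam + \<mu> i)^2 \<noteq> (lam + \<mu> j)^2"
  shows "\<exists>!(\<zeta>, \<beta>). length \<zeta> = N \<and> length \<beta> = N + 1 \<and>
           (\<forall>q. Cn_on (2*N) q \<longrightarrow>
              Cn_on (2*N) (Delta N \<alpha> \<tau>0 c \<mu> lam q) \<and>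
              (\<forall>x\<in>{-1..1}.
                 (\<Sum>k<N. \<zeta> ! k * dnth (2*k) (Delta N \<alpha> \<tau>0 c \<mu> lam q) x)
                   + dnth (2*N) (Delta N \<alpha> \<tau>0 c \<mu> lam q) x
                 = (\<Sum>k\<le>N. \<beta> ! k * dnth (2*k) q x)))"
    (is "\<exists>!p. ?P p")
proof -
  let ?R = "\<lambda>\<zeta> \<beta>. length \<zeta> = N \<and> length \<beta> = N + 1 \<and>
           (\<forall>q. Cn_on (2*N) q \<longrightarrow>
              Cn_on (2*N) (Delta N \<alpha> \<tau>0 c \<mu> lam q) \<and>
              (\<forall>x\<in>{-1..1}.
                 (\<Sum>k<N. \<zeta> ! k * dnth (2*k) (Delta N \<alpha> \<tau>0 c \<mu> lam q) x)
                   + dnth (2*N) (Delta N \<alpha> \<tau>0 c \<mu> lam q) x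
                 = (\<Sum>k\<le>N. \<beta> ! k * dnth (2*k) q x)))"
  define kk where "kk = (\<lambda>i. lam + \<mu> i)"
  have ex: "?R (zeta N kk) (beta N kk c (AA lam \<alpha> \<tau>0))"
  proof (intro conjI allI impI ballI)
    show "length (zeta N kk) = N" by (simp add: zeta_def)
    show "length (beta N kk c (AA lam \<alpha> \<tau>0)) = N + 1" by (simp add: beta_def)
    fix q assume q: "Cn_on (2*N) q"
    show "Cn_on (2*N) (Delta N \<alpha> \<tau>0 c \<mu> lam q)" by (rule Delta_reg(1)[OF q])
    fix x :: real assume x: "x \<in> {-1..1}"
    show "(\<Sum>k<N. zeta N kk ! k * dnth (2*k) (Delta N \<alpha> \<tau>0 c \<mu> lam q) x)
                   + dnth (2*N) (Delta N \<alpha> \<tau>0 c \<mu> lam q) x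
                 = (\<Sum>k\<le>N. beta N kk c (AA lam \<alpha> \<tau>0) ! k * dnth (2*k) q x)"
      unfolding kk_def by (rule existence[OF q x])
  qed
  have un: "\<zeta>1 = \<zeta>2 \<and> \<beta>1 = \<beta>2" if R1: "?R \<zeta>1 \<beta>1" and R2: "?R \<zeta>2 \<beta>2" for \<zeta>1 \<beta>1 \<zeta>2 \<beta>2
  proof -
    define d where "d m = \<zeta>1 ! m - \<zeta>2 ! m" for m
    define e where "e j = \<beta>1 ! j - \<beta>2 ! j" for j
    have H: "(\<Sum>m<N. d m * dnth (2*m) (Delta N \<alpha> \<tau>0 c \<mu> lam q) x) = (\<Sum>j\<le>N. e j * dnth (2*j) q x)"
      if qs: "\<forall>n. Cn_on n q" and x: "x \<in> II" for q x
    proof -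
      have q: "Cn_on (2*N) q" using qs by blast
      have 1: "(\<Sum>k<N. \<zeta>1 ! k * dnth (2*k) (Delta N \<alpha> \<tau>0 c \<mu> lam q) x) + dnth (2*N) (Delta N \<alpha> \<tau>0 c \<mu> lam q) x
                 = (\<Sum>k\<le>N. \<beta>1 ! k * dnth (2*k) q x)" using R1 q x by blast
      have 2: "(\<Sum>k<N. \<zeta>2 ! k * dnth (2*k) (Delta N \<alpha> \<tau>0 c \<mu> lam q) x) + dnth (2*N) (Delta N \<alpha> \<tau>0 c \<mu> lam q) x
                 = (\<Sum>k\<le>N. \<beta>2 ! k * dnth (2*k) q x)" using R2 q x by blast
      have "(\<Sum>m<N. d m * dnth (2*m) (Delta N \<alpha> \<tau>0 c \<mu> lam q) x)
          = (\<Sum>k<N. \<zeta>1 ! k * dnth (2*k) (Delta N \<alpha> \<tau>0 c \<mu> lam q) x) - (\<Sum>k<N. \<zeta>2 ! k * dnth (2*k) (Delta N \<alpha> \<tau>0 c \<mu> lam q) x)"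
        unfolding d_def by (simp add: left_diff_distrib sum_subtractf)
      also have "\<dots> = (\<Sum>k\<le>N. \<beta>1 ! k * dnth (2*k) q x) - (\<Sum>k\<le>N. \<beta>2 ! k * dnth (2*k) q x)"
        using 1 2 by (rule lin_aux)
      also have "\<dots> = (\<Sum>j\<le>N. e j * dnth (2*j) q x)"
        unfolding e_def by (simp add: left_diff_distrib sum_subtractf)
      finally show ?thesis .
    qed
    note U = uniq_core[OF assms(1) assms(4) assms(6) H]
    have "\<zeta>1 = \<zeta>2"
    proof (rule nth_equalityI)
      show "length \<zeta>1 = length \<zeta>2" using R1 R2 by simp
      fix i assume "i < length \<zeta>1"
      then have "i < N" using R1 by simp
      then show "\<zeta>1 ! i = \<zeta>2 ! i" using U(1) unfolding d_def by auto
    qed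
    moreover have "\<beta>1 = \<beta>2"
    proof (rule nth_equalityI)
      show "length \<beta>1 = length \<beta>2" using R1 R2 by simp
      fix i assume "i < length \<beta>1"
      then have "i \<le> N" using R1 by simp
      then show "\<beta>1 ! i = \<beta>2 ! i" using U(2) unfolding e_def by auto
    qed
    ultimately show ?thesis by simp
  qed
  show ?thesis
  proof (rule ex1I[where a="(zeta N kk, beta N kk c (AA lam \<alpha> \<tau>0))"])
    show "?P (zeta N kk, beta N kk c (AA lam \<alpha> \<tau>0))" using ex by simp
    fix p assume "?P p"
    then obtain z b where p: "p = (z, b)" and R: "?R z b" by (cases p) auto
    have "z = zeta N kk \<and> b = beta N kk c (AA lam \<alpha> \<tau>0)" by (rule un[OF R ex])
    then show "p = (zeta N kk, beta N kk c (AA lam \<alpha> \<tau>0))" using p by simp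
  qed
qed


end
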